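(* In the setting described in the context, $R_{t\infty}\ge R_{s\infty}$ (almost surely) for all $t\ge s\ge0$.
   Context: Let $(\Omega,\mathcal F,\mathbb P)$ be a probability space with a filtration $\{\mathcal F_t\}_{t\ge0}$ satisfying the usual conditions; (in)equalities between random variables hold a.s. A pricing kernel is an $\{\mathcal F_t\}$-adapted càdlàg semimartingale $\{\pi_t\}_{t\ge0}$ with (a) $\pi_t>0$, (b) $\mathbb E[\pi_t]<\infty$ for all $t\ge0$, (c) $\liminf_{t\to\infty}\mathbb E[\pi_t]=0$. Fix such a pricing kernel and set $P_{tT}=\pi_t^{-1}\mathbb E[\pi_T\mid\mathcal F_t]$ for $0\le t<T$. The exponential rate is $R_{tT}=-(T-t)^{-1}\ln P_{tT}$. For a family $\{A_x\}_{x\in\mathbb R^+}$ of $\mathcal F_t$-measurable extended-real random variables, $\limsup_{x\to\infty}A_x:=\operatorname{ess\,inf}_{x}\operatorname{ess\,sup}_{y\ge x}A_y$, with essential supremum/infimum taken among $\mathcal F_t$-measurable random variables. The long exponential rate is $R_{t\infty}=\limsup_{T\to\infty}R_{tT}$. *)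

theory Defs
  imports "HOL-Probability.Probability"
begin

definition filtration_on :: "'a measure \<Rightarrow> (real \<Rightarrow> 'a measure) \<Rightarrow> bool" where
  "filtration_on M F \<longleftrightarrow>
     (\<forall>t\<ge>0. subalgebra M (F t)) \<and>
     (\<forall>s t. 0 \<le> s \<longrightarrow> s \<le> t \<longrightarrow> sets (F s) \<subseteq> sets (F t))"

definition usual_conditions :: "'a measure \<Rightarrow> (real \<Rightarrow> 'a measure) \<Rightarrow> bool" where
  "usual_conditions M F \<longleftrightarrow>
     filtration_on M F \<and>
     (\<forall>N B. N \<in> null_sets M \<longrightarrow> B \<subseteq> N \<longrightarrow> B \<in> sets M) \<and>
     null_sets M \<subseteq> sets (F 0) \<and>
     (\<forall>t\<ge>0. sets (F t) = (\<Inter>u\<in>{t<..}. sets (F u)))"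

definition adapted :: "(real \<Rightarrow> 'a measure) \<Rightarrow> (real \<Rightarrow> 'a \<Rightarrow> real) \<Rightarrow> bool" where
  "adapted F X \<longleftrightarrow> (\<forall>t\<ge>0. X t \<in> borel_measurable (F t))"

definition cadlag :: "'a measure \<Rightarrow> (real \<Rightarrow> 'a \<Rightarrow> real) \<Rightarrow> bool" where
  "cadlag M X \<longleftrightarrow>
     (\<forall>\<omega>\<in>space M. \<forall>t\<ge>0.
        continuous (at_right t) (\<lambda>s. X s \<omega>) \<and>
        (t > 0 \<longrightarrow> (\<exists>l. ((\<lambda>s. X s \<omega>) \<longlongrightarrow> l) (at_left t))))"

definition martingale :: "'a measure \<Rightarrow> (real \<Rightarrow> 'a measure) \<Rightarrow> (real \<Rightarrow> 'a \<Rightarrow> real) \<Rightarrow> bool" where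
  "martingale M F X \<longleftrightarrow>
     adapted F X \<and> (\<forall>t\<ge>0. integrable M (X t)) \<and>
     (\<forall>s t. 0 \<le> s \<longrightarrow> s \<le> t \<longrightarrow>
        (AE \<omega> in M. real_cond_exp M (F s) (X t) \<omega> = X s \<omega>))"

definition stopping_time_ext :: "'a measure \<Rightarrow> (real \<Rightarrow> 'a measure) \<Rightarrow> ('a \<Rightarrow> ereal) \<Rightarrow> bool" where
  "stopping_time_ext M F \<tau> \<longleftrightarrow>
     (\<forall>\<omega>\<in>space M. 0 \<le> \<tau> \<omega>) \<and>
     (\<forall>t\<ge>0. {\<omega>\<in>space M. \<tau> \<omega> \<le> ereal t} \<in> sets (F t))"

definition stopped :: "(real \<Rightarrow> 'a \<Rightarrow> real) \<Rightarrow> ('a \<Rightarrow> ereal) \<Rightarrow> real \<Rightarrow> 'a \<Rightarrow> real" where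
  "stopped X \<tau> = (\<lambda>t \<omega>. X (real_of_ereal (min (ereal t) (\<tau> \<omega>))) \<omega>)"

definition local_martingale :: "'a measure \<Rightarrow> (real \<Rightarrow> 'a measure) \<Rightarrow> (real \<Rightarrow> 'a \<Rightarrow> real) \<Rightarrow> bool" where
  "local_martingale M F X \<longleftrightarrow>
     adapted F X \<and> cadlag M X \<and>
     (\<exists>\<tau> :: nat \<Rightarrow> 'a \<Rightarrow> ereal.
        (\<forall>n. stopping_time_ext M F (\<tau> n)) \<and>
        (AE \<omega> in M. incseq (\<lambda>n. \<tau> n \<omega>) \<and> (\<lambda>n. \<tau> n \<omega>) \<longlonglongrightarrow> \<infinity>) \<and>
        (\<forall>n. martingale M F (stopped X (\<tau> n))))"

definition finite_variation :: "'a measure \<Rightarrow> (real \<Rightarrow> 'a \<Rightarrow> real) \<Rightarrow> bool" where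
  "finite_variation M A \<longleftrightarrow>
     (\<forall>\<omega>\<in>space M. \<forall>t\<ge>0. \<exists>C. \<forall>(n::nat) (p::nat \<Rightarrow> real).
        0 \<le> p 0 \<longrightarrow> (\<forall>i<n. p i \<le> p (Suc i)) \<longrightarrow> p n \<le> t \<longrightarrow>
        (\<Sum>i<n. \<bar>A (p (Suc i)) \<omega> - A (p i) \<omega>\<bar>) \<le> C)"

definition semimartingale :: "'a measure \<Rightarrow> (real \<Rightarrow> 'a measure) \<Rightarrow> (real \<Rightarrow> 'a \<Rightarrow> real) \<Rightarrow> bool" where
  "semimartingale M F X \<longleftrightarrow>
     adapted F X \<and> cadlag M X \<and>
     (\<exists>L A. local_martingale M F L \<and> (\<forall>\<omega>\<in>space M. L 0 \<omega> = 0) \<and>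
        adapted F A \<and> cadlag M A \<and> finite_variation M A \<and> (\<forall>\<omega>\<in>space M. A 0 \<omega> = 0) \<and>
        (\<forall>t\<ge>0. \<forall>\<omega>\<in>space M. X t \<omega> = X 0 \<omega> + L t \<omega> + A t \<omega>))"

definition pricing_kernel :: "'a measure \<Rightarrow> (real \<Rightarrow> 'a measure) \<Rightarrow> (real \<Rightarrow> 'a \<Rightarrow> real) \<Rightarrow> bool" where
  "pricing_kernel M F \<pi> \<longleftrightarrow>
     semimartingale M F \<pi> \<and>
     (\<forall>t\<ge>0. AE \<omega> in M. \<pi> t \<omega> > 0) \<and>
     (\<forall>t\<ge>0. integrable M (\<pi> t)) \<and>
     Liminf at_top (\<lambda>t::real. ereal (integral\<^sup>L M (\<pi> t))) = 0"

definition bond_price :: "'a measure \<Rightarrow> (real \<Rightarrow> 'a measure) \<Rightarrow> (real \<Rightarrow> 'a \<Rightarrow> real) \<Rightarrow> real \<Rightarrow> real \<Rightarrow> 'a \<Rightarrow> real" where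
  "bond_price M F \<pi> t T = (\<lambda>\<omega>. real_cond_exp M (F t) (\<pi> T) \<omega> / \<pi> t \<omega>)"

definition exp_rate :: "'a measure \<Rightarrow> (real \<Rightarrow> 'a measure) \<Rightarrow> (real \<Rightarrow> 'a \<Rightarrow> real) \<Rightarrow> real \<Rightarrow> real \<Rightarrow> 'a \<Rightarrow> real" where
  "exp_rate M F \<pi> t T = (\<lambda>\<omega>. - ln (bond_price M F \<pi> t T \<omega>) / (T - t))"

definition is_ess_sup :: "'a measure \<Rightarrow> 'a measure \<Rightarrow> 'i set \<Rightarrow> ('i \<Rightarrow> 'a \<Rightarrow> ereal) \<Rightarrow> ('a \<Rightarrow> ereal) \<Rightarrow> bool" where
  "is_ess_sup M G I A Z \<longleftrightarrow>
     Z \<in> borel_measurable G \<and>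
     (\<forall>y\<in>I. AE \<omega> in M. A y \<omega> \<le> Z \<omega>) \<and>
     (\<forall>W \<in> borel_measurable G. (\<forall>y\<in>I. AE \<omega> in M. A y \<omega> \<le> W \<omega>) \<longrightarrow> (AE \<omega> in M. Z \<omega> \<le> W \<omega>))"

definition is_ess_inf :: "'a measure \<Rightarrow> 'a measure \<Rightarrow> 'i set \<Rightarrow> ('i \<Rightarrow> 'a \<Rightarrow> ereal) \<Rightarrow> ('a \<Rightarrow> ereal) \<Rightarrow> bool" where
  "is_ess_inf M G I A Z \<longleftrightarrow>
     Z \<in> borel_measurable G \<and>
     (\<forall>y\<in>I. AE \<omega> in M. Z \<omega> \<le> A y \<omega>) \<and>
     (\<forall>W \<in> borel_measurable G. (\<forall>y\<in>I. AE \<omega> in M. W \<omega> \<le> A y \<omega>) \<longrightarrow> (AE \<omega> in M. W \<omega> \<le> Z \<omega>))"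

definition ess_sup_fam :: "'a measure \<Rightarrow> 'a measure \<Rightarrow> 'i set \<Rightarrow> ('i \<Rightarrow> 'a \<Rightarrow> ereal) \<Rightarrow> 'a \<Rightarrow> ereal" where
  "ess_sup_fam M G I A = (SOME Z. is_ess_sup M G I A Z)"

definition ess_inf_fam :: "'a measure \<Rightarrow> 'a measure \<Rightarrow> 'i set \<Rightarrow> ('i \<Rightarrow> 'a \<Rightarrow> ereal) \<Rightarrow> 'a \<Rightarrow> ereal" where
  "ess_inf_fam M G I A = (SOME Z. is_ess_inf M G I A Z)"

text \<open>limsup_{x\<rightarrow>\<infinity>} A_x := ess inf_x ess sup_{y\<ge>x} A_y, relative to G.
  The index x ranges over I (the set where A is defined).\<close>
definition ess_limsup :: "'a measure \<Rightarrow> 'a measure \<Rightarrow> real set \<Rightarrow> (real \<Rightarrow> 'a \<Rightarrow> ereal) \<Rightarrow> 'a \<Rightarrow> ereal" where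
  "ess_limsup M G I A = ess_inf_fam M G I (\<lambda>x. ess_sup_fam M G (I \<inter> {x..}) A)"

definition long_rate :: "'a measure \<Rightarrow> (real \<Rightarrow> 'a measure) \<Rightarrow> (real \<Rightarrow> 'a \<Rightarrow> real) \<Rightarrow> real \<Rightarrow> 'a \<Rightarrow> ereal" where
  "long_rate M F \<pi> t = ess_limsup M (F t) {t<..} (\<lambda>T \<omega>. ereal (exp_rate M F \<pi> t T \<omega>))"

end

theory Submission imports Defs begin
definition phi :: "ereal \<Rightarrow> real" where
  "phi x = arctan (real_of_ereal x) + (if x = \<infinity> then 2 else if x = -\<infinity> then -2 else 0)"

lemma phi_borel: "phi \<in> borel_measurable borel"
proof -
  have "phi = (\<lambda>x. arctan (real_of_ereal x) + 2 * indicator {\<infinity>} x - 2 * indicator {-\<infinity>} x)"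
    by (auto simp: phi_def indicator_def fun_eq_iff)
  also have "\<dots> \<in> borel_measurable borel" by measurable
  finally show ?thesis .
qed

lemma phi_meas[measurable]: "f \<in> borel_measurable M \<Longrightarrow> (\<lambda>x. phi (f x)) \<in> borel_measurable M"
  using measurable_compose[OF _ phi_borel] by blast

lemma phi_bound: "\<bar>phi x\<bar> \<le> 2"
proof -
  have "\<bar>arctan r\<bar> < 2" for r using arctan_bounded[of r] pi_less_4 by auto
  then show ?thesis unfolding phi_def by (cases x) (auto simp: less_imp_le)
qed

lemma phi_strict: "x < y \<Longrightarrow> phi x < phi y"
proof -
  have a: "\<bar>arctan r\<bar> < 2" for r using arctan_bounded[of r] pi_less_4 by auto
  assume "x < y" then show ?thesis unfolding phi_def
    using a by (cases x; cases y) (auto simp: arctan_less_iff abs_less_iff, (smt (verit) a)+)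
qed

lemma phi_mono: "x \<le> y \<Longrightarrow> phi x \<le> phi y"
  using phi_strict[of x y] by (cases "x = y") (auto simp: order.order_iff_strict)

lemma ess_inf_gen:
  fixes U :: "('a \<Rightarrow> ereal) set"
  assumes P: "prob_space M" and sub: "subalgebra M G"
    and ne: "U \<noteq> {}" and Umeas: "\<And>W. W \<in> U \<Longrightarrow> W \<in> borel_measurable G"
    and Uinf: "\<And>Ws. (\<And>n::nat. Ws n \<in> U) \<Longrightarrow> (\<lambda>\<omega>. INF n. Ws n \<omega>) \<in> U"
  shows "\<exists>Z\<in>U. \<forall>W\<in>U. AE \<omega> in M. Z \<omega> \<le> W \<omega>"
proof -
  interpret prob_space M by fact
  have measM: "W \<in> borel_measurable M" if "W \<in> U" for W
    using measurable_from_subalg[OF sub Umeas[OF that]] .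
  define E where "E W = (\<integral>\<omega>. phi (W \<omega>) \<partial>M)" for W
  have int: "integrable M (\<lambda>\<omega>. phi (W \<omega>))" if "W \<in> U" for W
    by (rule integrable_const_bound[where B=2]) (use phi_bound measM[OF that] in auto)
  have Ebd: "-2 \<le> E W" if "W \<in> U" for W
  proof -
    have "(\<integral>\<omega>. -2 \<partial>M) \<le> E W" unfolding E_def
      by (rule integral_mono[OF _ int[OF that]]) (use phi_bound in \<open>auto simp: abs_le_iff, smt (verit) phi_bound\<close>)
    then show ?thesis by (simp add: prob_space)
  qed
  define m where "m = (INF W\<in>U. E W)"
  have bdd: "bdd_below (E ` U)" using Ebd by (auto intro!: bdd_belowI[where m="-2"])
  have mle: "m \<le> E W" if "W \<in> U" for W unfolding m_def by (rule cINF_lower[OF bdd that])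
  have "\<exists>W\<in>U. E W < m + 1 / (real n + 1)" for n::nat
  proof (rule ccontr)
    assume "\<not> ?thesis"
    then have "m + 1 / (real n + 1) \<le> m" unfolding m_def
      by (intro cINF_greatest[OF ne]) (auto simp: not_less m_def)
    moreover have "0 < 1 / (real n + 1)" by simp
    ultimately show False by linarith
  qed
  then obtain Ws where Ws: "\<And>n. Ws n \<in> U" "\<And>n. E (Ws n) < m + 1 / (real n + 1)" by metis
  define Z where "Z = (\<lambda>\<omega>. INF n. Ws n \<omega>)"
  have ZU: "Z \<in> U" unfolding Z_def by (rule Uinf[OF Ws(1)])
  have EZ: "E Z = m"
  proof (rule antisym[OF _ mle[OF ZU]])
    have "E Z \<le> E (Ws n)" for n unfolding E_def
      by (rule integral_mono[OF int[OF ZU] int[OF Ws(1)]]) (auto simp: Z_def intro!: phi_mono INF_lower)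
    then have "E Z < m + 1 / (real n + 1)" for n using Ws(2)[of n] by (meson order_le_less_trans)
    note lt = this
    show "E Z \<le> m"
    proof (rule field_le_epsilon)
      fix e :: real assume "0 < e"
      then obtain n :: nat where n: "1 / (real n + 1) < e"
        using nat_approx_posE by (metis of_nat_Suc add.commute)
      have "E Z < m + 1 / (real n + 1)" by (rule lt)
      with n show "E Z \<le> m + e" by linarith
    qed
  qed
  show ?thesis
  proof (intro bexI[OF _ ZU] ballI)
    fix W assume WU: "W \<in> U"
    define V where "V = (\<lambda>\<omega>. INF n. (if n = (0::nat) then Z else W) \<omega>)"
    have VU: "V \<in> U" unfolding V_def by (rule Uinf) (simp add: ZU WU)
    have Vmin: "V \<omega> = min (Z \<omega>) (W \<omega>)" for \<omega>
    proof (rule antisym)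
      show "V \<omega> \<le> min (Z \<omega>) (W \<omega>)" unfolding V_def
        using INF_lower[of 0 UNIV "\<lambda>n. (if n = (0::nat) then Z else W) \<omega>"]
              INF_lower[of 1 UNIV "\<lambda>n. (if n = (0::nat) then Z else W) \<omega>"] by simp
      show "min (Z \<omega>) (W \<omega>) \<le> V \<omega>" unfolding V_def
        by (rule INF_greatest) auto
    qed
    have "E V \<le> E Z" unfolding E_def
      by (rule integral_mono[OF int[OF VU] int[OF ZU]]) (auto simp: Vmin intro!: phi_mono)
    with mle[OF VU] EZ have "E V = E Z" by linarith
    then have "(\<integral>\<omega>. phi (Z \<omega>) - phi (V \<omega>) \<partial>M) = 0" unfolding E_def
      using int[OF VU] int[OF ZU] by simp
    moreover have "AE \<omega> in M. 0 \<le> phi (Z \<omega>) - phi (V \<omega>)"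
      using phi_mono[of "V _" "Z _"] by (simp add: Vmin)
    ultimately have "AE \<omega> in M. phi (Z \<omega>) - phi (V \<omega>) = 0"
      using integral_nonneg_eq_0_iff_AE[of M "\<lambda>\<omega>. phi (Z \<omega>) - phi (V \<omega>)"]
        Bochner_Integration.integrable_diff[OF int[OF ZU] int[OF VU]] by blast
    then show "AE \<omega> in M. Z \<omega> \<le> W \<omega>"
    proof (rule eventually_mono)
      fix \<omega> assume "phi (Z \<omega>) - phi (V \<omega>) = 0"
      then show "Z \<omega> \<le> W \<omega>" using phi_strict[of "W \<omega>" "Z \<omega>"] by (metis Vmin less_irrefl min_def not_le eq_iff_diff_eq_0)
    qed
  qed
qed

lemma ess_sup_ex:
  assumes P: "prob_space M" and sub: "subalgebra M G"
  shows "is_ess_sup M G I A (ess_sup_fam M G I A)"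
proof -
  define U where "U = {W. W \<in> borel_measurable G \<and> (\<forall>y\<in>I. AE \<omega> in M. A y \<omega> \<le> W \<omega>)}"
  have "(\<lambda>_. \<infinity>) \<in> U" unfolding U_def by auto
  then have ne: "U \<noteq> {}" by auto
  have inf: "(\<lambda>\<omega>. INF n. Ws n \<omega>) \<in> U" if "\<And>n::nat. Ws n \<in> U" for Ws
  proof -
    have m: "\<And>n. Ws n \<in> borel_measurable G" using that unfolding U_def by auto
    have "(\<lambda>\<omega>. INF n. Ws n \<omega>) \<in> borel_measurable G" using m by measurable
    moreover have "AE \<omega> in M. A y \<omega> \<le> (INF n. Ws n \<omega>)" if y: "y \<in> I" for y
    proof -
      have "AE \<omega> in M. \<forall>n. A y \<omega> \<le> Ws n \<omega>"
        using \<open>\<And>n. Ws n \<in> U\<close> y unfolding U_def AE_all_countable by auto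
      then show ?thesis by (rule eventually_mono) (auto intro: INF_greatest)
    qed
    ultimately show ?thesis unfolding U_def by auto
  qed
  obtain Z where "Z \<in> U" "\<forall>W\<in>U. AE \<omega> in M. Z \<omega> \<le> W \<omega>"
    using ess_inf_gen[OF P sub ne _ inf] unfolding U_def by blast
  then have "is_ess_sup M G I A Z" unfolding is_ess_sup_def U_def by auto
  then show ?thesis unfolding ess_sup_fam_def by (rule someI[where P="is_ess_sup M G I A"])
qed

lemma ess_inf_ex:
  assumes P: "prob_space M" and sub: "subalgebra M G"
  shows "is_ess_inf M G I A (ess_inf_fam M G I A)"
proof -
  define U where "U = {W. W \<in> borel_measurable G \<and> (\<forall>y\<in>I. AE \<omega> in M. - W \<omega> \<le> A y \<omega>)}"
  have "(\<lambda>_. \<infinity>) \<in> U" unfolding U_def by auto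
  then have ne: "U \<noteq> {}" by auto
  have inf: "(\<lambda>\<omega>. INF n. Ws n \<omega>) \<in> U" if "\<And>n::nat. Ws n \<in> U" for Ws
  proof -
    have m: "\<And>n. Ws n \<in> borel_measurable G" using that unfolding U_def by auto
    have "(\<lambda>\<omega>. INF n. Ws n \<omega>) \<in> borel_measurable G" using m by measurable
    moreover have "AE \<omega> in M. - (INF n. Ws n \<omega>) \<le> A y \<omega>" if y: "y \<in> I" for y
    proof -
      have "AE \<omega> in M. \<forall>n. - Ws n \<omega> \<le> A y \<omega>"
        using \<open>\<And>n. Ws n \<in> U\<close> y unfolding U_def AE_all_countable by auto
      then show ?thesis by (rule eventually_mono)
          (auto simp: ereal_uminus_le_reorder intro: INF_greatest)
    qed
    ultimately show ?thesis unfolding U_def by auto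
  qed
  obtain Z where Z: "Z \<in> U" "\<forall>W\<in>U. AE \<omega> in M. Z \<omega> \<le> W \<omega>"
    using ess_inf_gen[OF P sub ne _ inf] unfolding U_def by blast
  have "is_ess_inf M G I A (\<lambda>\<omega>. - Z \<omega>)" unfolding is_ess_inf_def
  proof (intro conjI ballI impI)
    show "(\<lambda>\<omega>. - Z \<omega>) \<in> borel_measurable G" using Z(1) unfolding U_def by auto
    show "AE \<omega> in M. - Z \<omega> \<le> A y \<omega>" if "y \<in> I" for y using Z(1) that unfolding U_def by auto
    fix W assume W: "W \<in> borel_measurable G" "\<forall>y\<in>I. AE \<omega> in M. W \<omega> \<le> A y \<omega>"
    then have "(\<lambda>\<omega>. - W \<omega>) \<in> U" unfolding U_def by auto
    with Z(2) have "AE \<omega> in M. Z \<omega> \<le> - W \<omega>" by auto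
    then show "AE \<omega> in M. W \<omega> \<le> - Z \<omega>" by (rule eventually_mono) (metis ereal_minus_le_minus ereal_uminus_uminus)
  qed
  then show ?thesis unfolding ess_inf_fam_def by (rule someI[where P="is_ess_inf M G I A"])
qed

lemma rate_bound:
  fixes c k ps y0 ce s t T \<epsilon> :: real
  assumes y0: "0 < y0" and ps: "0 < ps" and ce: "exp (- c * (T - t)) * y0 \<le> ce"
    and k: "- ln (y0 / ps) \<le> k" "0 \<le> k" and e: "0 < \<epsilon>" and st: "s \<le> t"
    and T: "s + (k + \<bar>c\<bar> * (t - s)) / \<epsilon> + 1 \<le> T"
  shows "- ln (ce / ps) / (T - s) \<le> c + \<epsilon>"
proof -
  define D where "D = k + \<bar>c\<bar> * (t - s)"
  have D0: "0 \<le> D" unfolding D_def using k st by simp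
  have Ts: "0 < T - s" using T D0 e unfolding D_def[symmetric] by (smt (verit) divide_nonneg_pos)
  have pos1: "0 < exp (- c * (T - t)) * y0 / ps" using y0 ps by simp
  have le1: "exp (- c * (T - t)) * y0 / ps \<le> ce / ps" using ce ps by (simp add: divide_right_mono)
  have "ln (exp (- c * (T - t)) * y0 / ps) = - c * (T - t) + ln (y0 / ps)"
    using y0 ps by (simp add: ln_mult ln_div)
  moreover have "ln (exp (- c * (T - t)) * y0 / ps) \<le> ln (ce / ps)"
    using pos1 le1 by simp
  ultimately have "- ln (ce / ps) \<le> c * (T - t) + k" using k by linarith
  then have "- ln (ce / ps) / (T - s) \<le> (c * (T - t) + k) / (T - s)"
    using Ts divide_right_mono[of "- ln (ce / ps)" "c * (T - t) + k" "T - s"] by simp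
  also have "(c * (T - t) + k) / (T - s) = c + (k - c * (t - s)) / (T - s)"
    using Ts by (simp add: field_simps)
  also have "(k - c * (t - s)) / (T - s) \<le> D / (T - s)"
    unfolding D_def using Ts st
    by (intro divide_right_mono) (auto simp: abs_if mult_le_cancel_right)
  also have "D / (T - s) \<le> \<epsilon>"
  proof -
    have "D / \<epsilon> < T - s" using T unfolding D_def[symmetric] by linarith
    then have "D < \<epsilon> * (T - s)" using e by (simp add: divide_less_eq mult.commute)
    then show ?thesis using Ts by (simp add: divide_le_eq mult.commute)
  qed
  finally show ?thesis by linarith
qed

lemma ess_sup_upper: "is_ess_sup M G I A Z \<Longrightarrow> y \<in> I \<Longrightarrow> AE \<omega> in M. A y \<omega> \<le> Z \<omega>"
  unfolding is_ess_sup_def by auto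
lemma ess_sup_least: "is_ess_sup M G I A Z \<Longrightarrow> W \<in> borel_measurable G \<Longrightarrow>
    (\<And>y. y \<in> I \<Longrightarrow> AE \<omega> in M. A y \<omega> \<le> W \<omega>) \<Longrightarrow> AE \<omega> in M. Z \<omega> \<le> W \<omega>"
  unfolding is_ess_sup_def by auto
lemma ess_sup_meas: "is_ess_sup M G I A Z \<Longrightarrow> Z \<in> borel_measurable G"
  unfolding is_ess_sup_def by auto
lemma ess_inf_lower: "is_ess_inf M G I A Z \<Longrightarrow> y \<in> I \<Longrightarrow> AE \<omega> in M. Z \<omega> \<le> A y \<omega>"
  unfolding is_ess_inf_def by auto
lemma ess_inf_greatest: "is_ess_inf M G I A Z \<Longrightarrow> W \<in> borel_measurable G \<Longrightarrow>
    (\<And>y. y \<in> I \<Longrightarrow> AE \<omega> in M. W \<omega> \<le> A y \<omega>) \<Longrightarrow> AE \<omega> in M. W \<omega> \<le> Z \<omega>"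
  unfolding is_ess_inf_def by auto
lemma ess_inf_meas: "is_ess_inf M G I A Z \<Longrightarrow> Z \<in> borel_measurable G"
  unfolding is_ess_inf_def by auto

lemma lowerB_pt:
  fixes pt ce c t T :: real
  assumes "0 < pt" "0 < ce" "t < T" "- ln (ce / pt) / (T - t) < c"
  shows "exp (- c * (T - t)) * pt \<le> ce"
proof -
  have "- ln (ce / pt) < c * (T - t)" using assms(4) pos_divide_less_eq[of "T - t" "- ln (ce / pt)" c] assms(3)
    by (simp add: mult.commute)
  then have "- c * (T - t) < ln (ce / pt)" by linarith
  then have "exp (- c * (T - t)) < ce / pt" using assms(1,2)
    by (metis divide_pos_pos exp_less_cancel_iff exp_ln)
  then show ?thesis using assms(1) by (simp add: less_divide_eq less_imp_le)
qed

lemma integrable_ind_mult: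
  fixes f :: "'a \<Rightarrow> real"
  shows "A \<in> sets M \<Longrightarrow> integrable M f \<Longrightarrow> integrable M (\<lambda>x. indicator A x * f x)"
  using integrable_mult_indicator[of A M f] by simp

locale pk_setting =
  fixes M :: "'a measure" and F :: "real \<Rightarrow> 'a measure" and \<pi> :: "real \<Rightarrow> 'a \<Rightarrow> real"
  assumes P: "prob_space M"
   and subF: "\<And>u. 0 \<le> u \<Longrightarrow> subalgebra M (F u)"
   and monoF: "\<And>a b. 0 \<le> a \<Longrightarrow> a \<le> b \<Longrightarrow> sets (F a) \<subseteq> sets (F b)"
   and meas: "\<And>u. 0 \<le> u \<Longrightarrow> \<pi> u \<in> borel_measurable (F u)"
   and pos: "\<And>u. 0 \<le> u \<Longrightarrow> AE \<omega> in M. 0 < \<pi> u \<omega>"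
   and int: "\<And>u. 0 \<le> u \<Longrightarrow> integrable M (\<pi> u)"
begin

lemma sfs: "0 \<le> u \<Longrightarrow> sigma_finite_subalgebra M (F u)"
  using finite_measure_subalgebra_is_sigma_finite[of M "F u"] subF[of u] P
  unfolding finite_measure_subalgebra_def finite_measure_subalgebra_axioms_def prob_space_def
  by auto

lemma measM: "0 \<le> u \<Longrightarrow> \<pi> u \<in> borel_measurable M"
  using measurable_from_subalg[OF subF meas] by blast

lemma spaceF: "0 \<le> u \<Longrightarrow> space (F u) = space M"
  using subF unfolding subalgebra_def by auto

lemma setsF: "0 \<le> u \<Longrightarrow> A \<in> sets (F u) \<Longrightarrow> A \<in> sets M"
  using subF unfolding subalgebra_def by auto

lemma nested: "0 \<le> a \<Longrightarrow> a \<le> b \<Longrightarrow> subalgebra (F b) (F a)"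
  unfolding subalgebra_def using monoF[of a b] spaceF[of a] spaceF[of b] by auto

lemma meas_up: "0 \<le> a \<Longrightarrow> a \<le> b \<Longrightarrow> f \<in> borel_measurable (F a) \<Longrightarrow> f \<in> borel_measurable (F b)"
  using measurable_from_subalg[OF nested] by blast

lemma ce_pos: "0 \<le> u \<Longrightarrow> 0 \<le> T \<Longrightarrow> AE \<omega> in M. 0 < real_cond_exp M (F u) (\<pi> T) \<omega>"
  using sigma_finite_subalgebra.real_cond_exp_gr_c[OF sfs int pos] by blast

abbreviation "Zs u x \<equiv> ess_sup_fam M (F u) ({u<..} \<inter> {x..}) (\<lambda>T \<omega>. ereal (exp_rate M F \<pi> u T \<omega>))"

lemma Zs_sup: "0 \<le> u \<Longrightarrow> is_ess_sup M (F u) ({u<..} \<inter> {x..}) (\<lambda>T \<omega>. ereal (exp_rate M F \<pi> u T \<omega>)) (Zs u x)"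
  by (rule ess_sup_ex[OF P subF])

lemma L_inf: "0 \<le> u \<Longrightarrow> is_ess_inf M (F u) {u<..} (Zs u) (long_rate M F \<pi> u)"
  unfolding long_rate_def ess_limsup_def by (rule ess_inf_ex[OF P subF])

lemma lowerB:
  assumes t: "0 \<le> t" "t < x" "x \<le> T" and A: "A \<subseteq> {\<omega>. Zs t x \<omega> < ereal c}"
  shows "AE \<omega> in M. exp (- c * (T - t)) * (indicator A \<omega> * \<pi> t \<omega>) \<le> real_cond_exp M (F t) (\<pi> T) \<omega>"
proof -
  have T0: "0 \<le> T" using t by linarith
  have "AE \<omega> in M. ereal (exp_rate M F \<pi> t T \<omega>) \<le> Zs t x \<omega>"
  proof -
    have TI: "T \<in> {t<..} \<inter> {x..}" using t by auto
    show ?thesis by (rule ess_sup_upper[OF Zs_sup[OF t(1)] TI])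
  qed
  moreover note pos[OF t(1)] ce_pos[OF t(1) T0]
  ultimately show ?thesis
  proof eventually_elim
    case (elim \<omega>)
    show ?case
    proof (cases "\<omega> \<in> A")
      case True
      then have "Zs t x \<omega> < ereal c" using A by blast
      with elim(1) have "ereal (exp_rate M F \<pi> t T \<omega>) < ereal c" by (rule le_less_trans)
      then have "- ln (real_cond_exp M (F t) (\<pi> T) \<omega> / \<pi> t \<omega>) / (T - t) < c"
        by (simp add: exp_rate_def bond_price_def)
      from lowerB_pt[OF elim(2) elim(3) _ this] t True show ?thesis by (simp add: mult.commute)
    next
      case False
      then show ?thesis using elim by simp
    qed
  qed
qed


lemma lowerS:
  assumes st: "0 \<le> s" "s \<le> t" "t < x" "x \<le> T"
    and A: "A \<subseteq> {\<omega>. Zs t x \<omega> < ereal c}" "A \<in> sets M"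
  shows "AE \<omega> in M. exp (- c * (T - t)) * real_cond_exp M (F s) (\<lambda>\<omega>. indicator A \<omega> * \<pi> t \<omega>) \<omega>
            \<le> real_cond_exp M (F s) (\<pi> T) \<omega>"
proof -
  have t0: "0 \<le> t" "0 \<le> T" using st by linarith+
  interpret S: sigma_finite_subalgebra M "F s" by (rule sfs[OF st(1)])
  interpret Tt: sigma_finite_subalgebra M "F t" by (rule sfs[OF t0(1)])
  have ig: "integrable M (\<lambda>\<omega>. indicator A \<omega> * \<pi> t \<omega>)" by (rule integrable_ind_mult[OF A(2) int[OF t0(1)]])
  have ig2: "integrable M (\<lambda>\<omega>. exp (- c * (T - t)) * (indicator A \<omega> * \<pi> t \<omega>))" using ig by simp
  have ice: "integrable M (real_cond_exp M (F t) (\<pi> T))" by (rule Tt.real_cond_exp_int(1)[OF int[OF t0(2)]])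
  have 1: "AE \<omega> in M. real_cond_exp M (F s) (real_cond_exp M (F t) (\<pi> T)) \<omega> = real_cond_exp M (F s) (\<pi> T) \<omega>"
    by (rule S.real_cond_exp_nested_subalg[OF subF[OF t0(1)] nested[OF st(1,2)] int[OF t0(2)]])
  have 2: "AE \<omega> in M. real_cond_exp M (F s) (\<lambda>\<omega>. exp (- c * (T - t)) * (indicator A \<omega> * \<pi> t \<omega>)) \<omega>
      \<le> real_cond_exp M (F s) (real_cond_exp M (F t) (\<pi> T)) \<omega>"
    by (rule S.real_cond_exp_mono[OF lowerB[OF t0(1) st(3,4) A(1)] ig2 ice])
  have 3: "AE \<omega> in M. real_cond_exp M (F s) (\<lambda>\<omega>. exp (- c * (T - t)) * (indicator A \<omega> * \<pi> t \<omega>)) \<omega>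
      = exp (- c * (T - t)) * real_cond_exp M (F s) (\<lambda>\<omega>. indicator A \<omega> * \<pi> t \<omega>) \<omega>"
    by (rule S.real_cond_exp_cmult[OF ig])
  from 1 2 3 show ?thesis by eventually_elim linarith
qed

end

lemma ereal_le_eps:
  assumes "\<And>j::nat. L \<le> ereal (c + 1 / (real j + 1))"
  shows "L \<le> ereal c"
proof (cases L)
  case (real r)
  have "r \<le> c"
  proof (rule field_le_epsilon)
    fix e :: real assume "0 < e"
    then obtain n :: nat where n: "1 / real (Suc n) < e" by (rule nat_approx_posE)
    have "r \<le> c + 1 / (real n + 1)" using assms[of n] real by simp
    with n show "r \<le> c + e" by (simp add: add.commute)
  qed
  then show ?thesis using real by simp
next
  case PInf
  then show ?thesis using assms[of 0] by simp
qed simp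


context pk_setting
begin

lemma key1:
  assumes st: "0 \<le> s" "s \<le> t" "t < x"
    and A: "A \<subseteq> {\<omega>. Zs t x \<omega> < ereal c}" "A \<in> sets M"
  shows "AE \<omega> in M. 0 < real_cond_exp M (F s) (\<lambda>\<omega>. indicator A \<omega> * \<pi> t \<omega>) \<omega> \<and> 0 < \<pi> s \<omega>
           \<longrightarrow> long_rate M F \<pi> s \<omega> \<le> ereal c"
proof -
  define Y0 where "Y0 = real_cond_exp M (F s) (\<lambda>\<omega>. indicator A \<omega> * \<pi> t \<omega>)"
  have Y0m: "Y0 \<in> borel_measurable (F s)" unfolding Y0_def by (rule borel_measurable_cond_exp)
  have pism: "\<pi> s \<in> borel_measurable (F s)" by (rule meas[OF st(1)])
  define B where "B k = {\<omega> \<in> space M. 0 < Y0 \<omega> \<and> 0 < \<pi> s \<omega> \<and> - ln (Y0 \<omega> / \<pi> s \<omega>) \<le> real k}" for k :: nat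
  have Bm: "B k \<in> sets (F s)" for k
  proof -
    have "B k = {\<omega> \<in> space (F s). 0 < Y0 \<omega> \<and> 0 < \<pi> s \<omega> \<and> - ln (Y0 \<omega> / \<pi> s \<omega>) \<le> real k}"
      unfolding B_def spaceF[OF st(1)] ..
    also have "\<dots> \<in> sets (F s)" using Y0m pism by measurable
    finally show ?thesis .
  qed
  have main: "AE \<omega> in M. \<omega> \<in> B k \<longrightarrow> long_rate M F \<pi> s \<omega> \<le> ereal (c + 1 / (real j + 1))" for k j :: nat
  proof -
    define \<epsilon> where "\<epsilon> = 1 / (real j + 1)"
    have e: "0 < \<epsilon>" unfolding \<epsilon>_def by simp
    define T0 where "T0 = max x (s + (real k + \<bar>c\<bar> * (t - s)) / \<epsilon> + 1)"
    define W where "W = (\<lambda>\<omega>. if \<omega> \<in> B k then ereal (c + \<epsilon>) else \<infinity>)"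
    have Wm: "W \<in> borel_measurable (F s)" unfolding W_def
      by (rule measurable_If_set) (use Bm[of k] in auto)
    have T0s: "s < T0" using st unfolding T0_def by auto
    have bound: "AE \<omega> in M. ereal (exp_rate M F \<pi> s T \<omega>) \<le> W \<omega>" if T: "T \<in> {s<..} \<inter> {T0..}" for T
    proof -
      have xT: "x \<le> T" using T unfolding T0_def by auto
      have T1: "s + (real k + \<bar>c\<bar> * (t - s)) / \<epsilon> + 1 \<le> T" using T unfolding T0_def by auto
      from lowerS[OF st xT A] show ?thesis
      proof eventually_elim
        case (elim \<omega>)
        show ?case
        proof (cases "\<omega> \<in> B k")
          case True
          then have b: "0 < Y0 \<omega>" "0 < \<pi> s \<omega>" "- ln (Y0 \<omega> / \<pi> s \<omega>) \<le> real k" unfolding B_def by auto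
          have "- ln (real_cond_exp M (F s) (\<pi> T) \<omega> / \<pi> s \<omega>) / (T - s) \<le> c + \<epsilon>"
            by (rule rate_bound[OF b(1,2) _ b(3) _ e st(2) T1]) (use elim in \<open>auto simp: Y0_def\<close>)
          then show ?thesis using True by (simp add: W_def exp_rate_def bond_price_def)
        next
          case False then show ?thesis by (simp add: W_def)
        qed
      qed
    qed
    have "AE \<omega> in M. Zs s T0 \<omega> \<le> W \<omega>" by (rule ess_sup_least[OF Zs_sup[OF st(1)] Wm bound])
    moreover have "AE \<omega> in M. long_rate M F \<pi> s \<omega> \<le> Zs s T0 \<omega>"
      by (rule ess_inf_lower[OF L_inf[OF st(1)]]) (use T0s in auto)
    ultimately show ?thesis
    proof eventually_elim
      case (elim \<omega>)
      then show ?case unfolding W_def \<epsilon>_def[symmetric] by auto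
    qed
  qed
  have "AE \<omega> in M. \<forall>k j. \<omega> \<in> B k \<longrightarrow> long_rate M F \<pi> s \<omega> \<le> ereal (c + 1 / (real j + 1))"
    unfolding AE_all_countable using main by blast
  then have "AE \<omega> in M. 0 < Y0 \<omega> \<and> 0 < \<pi> s \<omega> \<longrightarrow> long_rate M F \<pi> s \<omega> \<le> ereal c"
    using AE_space
  proof eventually_elim
    case (elim \<omega>)
    show ?case
    proof
      assume H: "0 < Y0 \<omega> \<and> 0 < \<pi> s \<omega>"
      obtain k :: nat where k: "- ln (Y0 \<omega> / \<pi> s \<omega>) \<le> real k" using real_arch_simple by blast
      have "\<omega> \<in> B k" unfolding B_def using H k elim(2) by blast
      then have "\<forall>j. long_rate M F \<pi> s \<omega> \<le> ereal (c + 1 / (real j + 1))" using elim(1) by blast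
      then show "long_rate M F \<pi> s \<omega> \<le> ereal c" using ereal_le_eps by blast
    qed
  qed
  then show ?thesis unfolding Y0_def .
qed

end

context pk_setting
begin

lemma key2:
  assumes st: "0 \<le> s" "s \<le> t" "t < x"
  shows "AE \<omega> in M. Zs t x \<omega> < ereal c \<longrightarrow> long_rate M F \<pi> s \<omega> \<le> ereal c"
proof -
  have t0: "0 \<le> t" using st by linarith
  interpret S: sigma_finite_subalgebra M "F s" by (rule sfs[OF st(1)])
  have Zm: "Zs t x \<in> borel_measurable (F t)" by (rule ess_sup_meas[OF Zs_sup[OF t0]])
  have Lm: "long_rate M F \<pi> s \<in> borel_measurable (F s)" by (rule ess_inf_meas[OF L_inf[OF st(1)]])
  have Lmt: "long_rate M F \<pi> s \<in> borel_measurable (F t)" by (rule meas_up[OF st(1,2) Lm])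
  define A where "A = {\<omega> \<in> space M. Zs t x \<omega> < ereal c \<and> ereal c < long_rate M F \<pi> s \<omega>}"
  have AFt: "A \<in> sets (F t)"
  proof -
    have "A = {\<omega> \<in> space (F t). Zs t x \<omega> < ereal c \<and> ereal c < long_rate M F \<pi> s \<omega>}"
      unfolding A_def spaceF[OF t0] ..
    also have "\<dots> \<in> sets (F t)" using Zm Lmt by measurable
    finally show ?thesis .
  qed
  have AM: "A \<in> sets M" by (rule setsF[OF t0 AFt])
  have Asub: "A \<subseteq> {\<omega>. Zs t x \<omega> < ereal c}" unfolding A_def by auto
  define C where "C = {\<omega> \<in> space M. ereal c < long_rate M F \<pi> s \<omega>}"
  have CFs: "C \<in> sets (F s)"
  proof -
    have "C = {\<omega> \<in> space (F s). ereal c < long_rate M F \<pi> s \<omega>}"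
      unfolding C_def spaceF[OF st(1)] ..
    also have "\<dots> \<in> sets (F s)" using Lm by measurable
    finally show ?thesis .
  qed
  have CM: "C \<in> sets M" by (rule setsF[OF st(1) CFs])
  define g where "g = (\<lambda>\<omega>. indicator A \<omega> * \<pi> t \<omega>)"
  define Y0 where "Y0 = real_cond_exp M (F s) g"
  have gi: "integrable M g" unfolding g_def by (rule integrable_ind_mult[OF AM int[OF t0]])
  have gC: "integrable M (\<lambda>\<omega>. indicator C \<omega> * g \<omega>)" by (rule integrable_ind_mult[OF CM gi])
  have gm: "g \<in> borel_measurable M" using gi by (rule borel_measurable_integrable)
  have indC: "indicator C \<in> borel_measurable (F s)" using CFs by (rule borel_measurable_indicator)
  have eq1: "(\<integral>\<omega>. indicator C \<omega> * Y0 \<omega> \<partial>M) = (\<integral>\<omega>. indicator C \<omega> * g \<omega> \<partial>M)"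
    unfolding Y0_def by (rule S.real_cond_exp_intg(2)[OF gC indC gm])
  have eq2: "(\<lambda>\<omega>. indicator C \<omega> * g \<omega>) = g"
    unfolding g_def A_def C_def by (auto simp: indicator_def fun_eq_iff)
  have gnn: "AE \<omega> in M. 0 \<le> g \<omega>" using pos[OF t0] by eventually_elim (simp add: g_def)
  have Y0nn: "AE \<omega> in M. 0 \<le> Y0 \<omega>" unfolding Y0_def by (rule S.real_cond_exp_pos[OF gnn gm])
  have "AE \<omega> in M. indicator C \<omega> * Y0 \<omega> = 0"
    using key1[OF st Asub AM, of ] Y0nn pos[OF st(1)]
  proof eventually_elim
    case (elim \<omega>)
    show ?case
    proof (cases "\<omega> \<in> C")
      case True
      then have "\<not> long_rate M F \<pi> s \<omega> \<le> ereal c" unfolding C_def by auto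
      with elim(1) have "\<not> 0 < Y0 \<omega>" using elim(3) unfolding Y0_def g_def by blast
      with elim(2) show ?thesis by simp
    qed simp
  qed
  then have "(\<integral>\<omega>. indicator C \<omega> * Y0 \<omega> \<partial>M) = 0" by (rule integral_eq_zero_AE)
  with eq1 eq2 have "integral\<^sup>L M g = 0" by simp
  then have "AE \<omega> in M. g \<omega> = 0" using integral_nonneg_eq_0_iff_AE[OF gi gnn] by simp
  then show ?thesis using pos[OF t0] AE_space
  proof eventually_elim
    case (elim \<omega>)
    then have "\<omega> \<notin> A" unfolding g_def by auto
    then show ?case using elim(3) unfolding A_def by auto
  qed
qed

end

context pk_setting
begin

lemma Zmono:
  assumes "0 \<le> t" "x \<le> x'"
  shows "AE \<omega> in M. Zs t x' \<omega> \<le> Zs t x \<omega>"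
proof (rule ess_sup_least[OF Zs_sup[OF assms(1)] ess_sup_meas[OF Zs_sup[OF assms(1)]]])
  fix y assume "y \<in> {t<..} \<inter> {x'..}"
  then have "y \<in> {t<..} \<inter> {x..}" using assms by auto
  then show "AE \<omega> in M. ereal (exp_rate M F \<pi> t y \<omega>) \<le> Zs t x \<omega>"
    by (rule ess_sup_upper[OF Zs_sup[OF assms(1)]])
qed

lemma rates_mono:
  assumes st: "0 \<le> s" "s \<le> t"
  shows "AE \<omega> in M. long_rate M F \<pi> s \<omega> \<le> long_rate M F \<pi> t \<omega>"
proof -
  have t0: "0 \<le> t" using st by linarith
  define Wt where "Wt = (\<lambda>\<omega>. INF n::nat. Zs t (t + real n + 1) \<omega>)"
  have Zm: "Zs t (t + real n + 1) \<in> borel_measurable (F t)" for n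
    by (rule ess_sup_meas[OF Zs_sup[OF t0]])
  have Wtm: "Wt \<in> borel_measurable (F t)" unfolding Wt_def using Zm by measurable
  have "AE \<omega> in M. Wt \<omega> \<le> long_rate M F \<pi> t \<omega>"
  proof (rule ess_inf_greatest[OF L_inf[OF t0] Wtm])
    fix y assume y: "y \<in> {t<..}"
    obtain n :: nat where n: "y - t \<le> real n" using real_arch_simple by blast
    have "AE \<omega> in M. Zs t (t + real n + 1) \<omega> \<le> Zs t y \<omega>"
      by (rule Zmono[OF t0]) (use n in linarith)
    then show "AE \<omega> in M. Wt \<omega> \<le> Zs t y \<omega>"
    proof eventually_elim
      case (elim \<omega>)
      have "Wt \<omega> \<le> Zs t (t + real n + 1) \<omega>" unfolding Wt_def by (rule INF_lower) simp
      with elim show ?case by (meson order.trans)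
    qed
  qed
  moreover have "AE \<omega> in M. \<forall>n::nat. \<forall>q::rat. Zs t (t + real n + 1) \<omega> < ereal (of_rat q)
                      \<longrightarrow> long_rate M F \<pi> s \<omega> \<le> ereal (of_rat q)"
    unfolding AE_all_countable
  proof (intro allI)
    fix n :: nat and q :: rat
    show "AE \<omega> in M. Zs t (t + real n + 1) \<omega> < ereal (of_rat q) \<longrightarrow> long_rate M F \<pi> s \<omega> \<le> ereal (of_rat q)"
      by (rule key2) (use st in auto)
  qed
  ultimately show ?thesis
  proof eventually_elim
    case (elim \<omega>)
    show ?case
    proof (rule ccontr)
      assume "\<not> ?case"
      then have lt: "Wt \<omega> < long_rate M F \<pi> s \<omega>" using elim(1) by auto
      obtain r1 where r1: "Wt \<omega> < ereal r1" "ereal r1 < long_rate M F \<pi> s \<omega>"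
        using ereal_dense2[OF lt] by blast
      obtain r0 where r0: "Wt \<omega> < ereal r0" "ereal r0 < ereal r1"
        using ereal_dense2[OF r1(1)] by blast
      have "r0 < r1" using r0(2) by simp
      then obtain qr where qr: "qr \<in> \<rat>" "r0 < qr" "qr < r1" using Rats_dense_in_real by blast
      then obtain q :: rat where q: "qr = of_rat q" by (auto elim: Rats_cases)
      have "ereal r0 < ereal (of_rat q)" using qr(2) q by simp
      with r0(1) have "Wt \<omega> < ereal (of_rat q)" by (rule less_trans)
      then obtain n :: nat where "Zs t (t + real n + 1) \<omega> < ereal (of_rat q)"
        unfolding Wt_def by (auto simp: INF_less_iff)
      with elim(2) have "long_rate M F \<pi> s \<omega> \<le> ereal (of_rat q)" by blast
      moreover have "ereal (of_rat q) < ereal r1" using qr(3) q by simp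
      then have "ereal (of_rat q) < long_rate M F \<pi> s \<omega>" using r1(2) by (rule less_trans)
      ultimately show False by simp
    qed
  qed
qed

end

theorem proposition5:
  fixes M :: "'a measure" and F :: "real \<Rightarrow> 'a measure" and \<pi> :: "real \<Rightarrow> 'a \<Rightarrow> real"
  assumes "prob_space M"
    and "usual_conditions M F"
    and "pricing_kernel M F \<pi>"
    and "0 \<le> s" and "s \<le> t"
  shows "AE \<omega> in M. long_rate M F \<pi> t \<omega> \<ge> long_rate M F \<pi> s \<omega>"
proof -
  have fo: "filtration_on M F" using assms(2) unfolding usual_conditions_def by (rule conjunct1)
  have h1: "\<forall>u\<ge>0. subalgebra M (F u)"
    using fo unfolding filtration_on_def by (rule conjunct1)
  have h2: "\<forall>a b. 0 \<le> a \<longrightarrow> a \<le> b \<longrightarrow> sets (F a) \<subseteq> sets (F b)"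
    using fo unfolding filtration_on_def by (rule conjunct2)
  have pk: "semimartingale M F \<pi>" "\<forall>u\<ge>0. AE \<omega> in M. 0 < \<pi> u \<omega>" "\<forall>u\<ge>0. integrable M (\<pi> u)"
    using assms(3) unfolding pricing_kernel_def by auto
  have "adapted F \<pi>" using pk(1) unfolding semimartingale_def by (rule conjunct1)
  then have h3: "\<forall>u\<ge>0. \<pi> u \<in> borel_measurable (F u)" unfolding adapted_def .
  have "pk_setting M F \<pi>"
    by (rule pk_setting.intro[OF assms(1)]) (use h1 h2 h3 pk(2,3) in auto)
  then show ?thesis using pk_setting.rates_mono[OF _ assms(4,5)] by blast
qed

end
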